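(* Let $H\in\mathbb{R}^{n\times d}$, $\Sigma\in\mathbb{R}^{n\times n}$ symmetric positive definite, $y\in\mathbb{R}^n$, $J\ge2$, and let $v_i^{(j)}$ be generated by deterministic EKI $$v_{i+1}^{(j)}=v_i^{(j)}+\Gamma_iH^\top(H\Gamma_iH^\top+\Sigma)^{-1}(y-Hv_i^{(j)}),$$ with $\Gamma_i$ the empirical covariance of $v_i^{(1)},\dots,v_i^{(J)}$. If $w\in\mathbb{R}^n\setminus\{0\}$ and $\delta_i\in\mathbb{R}$ satisfy $H\Gamma_iH^\top w=\delta_i\Sigma w$, then $H\Gamma_{i+1}H^\top w=\delta_{i+1}\Sigma w$ with $\delta_{i+1}=\delta_i/(1+\delta_i)^2$. In particular the generalized eigenvectors of the pencil $(H\Gamma_iH^\top,\Sigma)$ are constant in $i$.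
   Context: Empirical covariance: $\Gamma_i=\frac1{J-1}\sum_{j=1}^J(v_i^{(j)}-\bar v_i)(v_i^{(j)}-\bar v_i)^\top$, $\bar v_i=\frac1J\sum_jv_i^{(j)}$. *)

theory Defs
  imports "HOL-Analysis.Analysis"
begin

definition outer :: "real^'m \<Rightarrow> real^'k \<Rightarrow> real^'k^'m" where
  "outer u v = (\<chi> i j. u $ i * v $ j)"

definition ens_mean :: "nat \<Rightarrow> (nat \<Rightarrow> real^'d) \<Rightarrow> real^'d" where
  "ens_mean J v = (1 / real J) *\<^sub>R (\<Sum>j=1..J. v j)"

definition emp_cov :: "nat \<Rightarrow> (nat \<Rightarrow> real^'d) \<Rightarrow> real^'d^'d" where
  "emp_cov J v = (1 / (real J - 1)) *\<^sub>R
     (\<Sum>j=1..J. outer (v j - ens_mean J v) (v j - ens_mean J v))"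

definition spd :: "real^'n^'n \<Rightarrow> bool" where
  "spd S \<longleftrightarrow> transpose S = S \<and> (\<forall>x. x \<noteq> 0 \<longrightarrow> x \<bullet> (S *v x) > 0)"

end

theory Submission imports Defs begin

lemma outer_mv: "outer u u *v x = (u \<bullet> x) *\<^sub>R u"
  by (simp add: vec_eq_iff outer_def matrix_vector_mult_def inner_vec_def sum_distrib_left mult_ac)

lemma sum_mv: "(sum f S) *v x = sum (\<lambda>j. f j *v x) S"
  by (induction S rule: infinite_finite_induct) (auto simp: matrix_vector_mult_add_rdistrib)

lemma emp_cov_mv: "emp_cov J v *v x = (1 / (real J - 1)) *\<^sub>R
   (\<Sum>j=1..J. ((v j - ens_mean J v) \<bullet> x) *\<^sub>R (v j - ens_mean J v))"
  unfolding emp_cov_def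
  by (simp add: scaleR_matrix_vector_assoc[symmetric] sum_mv outer_mv)

lemma emp_cov_sym: "transpose (emp_cov J v) = emp_cov J v"
  by (simp add: vec_eq_iff transpose_def emp_cov_def outer_def sum_component mult.commute)

lemma dot_mv: "((M::real^'n^'m) *v a) \<bullet> x = a \<bullet> (transpose M *v x)"
proof -
  have "a \<bullet> (transpose M *v x) = (x v* M) \<bullet> a" by (simp only: transpose_matrix_vector inner_commute)
  also have "\<dots> = x \<bullet> (M *v a)" by (rule dot_lmul_matrix)
  also have "\<dots> = (M *v a) \<bullet> x" by (rule inner_commute)
  finally show ?thesis by (rule sym)
qed

lemma emp_cov_psd: "J \<ge> 2 \<Longrightarrow> z \<bullet> (emp_cov J v *v z) \<ge> 0"
  by (simp add: emp_cov_mv inner_sum_right sum_nonneg inner_commute)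

lemma lin_sum: "M *v sum f S = sum (\<lambda>j. M *v f j) S"
  by (induction S rule: infinite_finite_induct) (auto simp: matrix_vector_right_distrib)

lemma ens_mean_affine:
  assumes "J > 0" "\<And>j. j \<in> {1..J} \<Longrightarrow> u j = M *v v j + b"
  shows "ens_mean J u = M *v ens_mean J v + b"
proof -
  have "(\<Sum>j=1..J. u j) = M *v (\<Sum>j=1..J. v j) + real J *\<^sub>R b"
    using assms(2) by (simp add: lin_sum sum.distrib vec_eq_iff of_nat_index)
  then show ?thesis using assms(1)
    by (simp add: ens_mean_def scaleR_add_right matrix_vector_mult_scaleR)
qed

lemma emp_cov_affine:
  assumes "J > 0" "\<And>j. j \<in> {1..J} \<Longrightarrow> u j = M *v v j + b"
  shows "emp_cov J u *v x = M *v (emp_cov J v *v (transpose M *v x))"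
proof -
  have e: "u j - ens_mean J u = M *v (v j - ens_mean J v)" if "j \<in> {1..J}" for j
    using ens_mean_affine[OF assms] assms(2)[OF that] by (simp add: matrix_vector_mult_diff_distrib)
  have "emp_cov J u *v x = (1 / (real J - 1)) *\<^sub>R
   (\<Sum>j=1..J. ((M *v (v j - ens_mean J v)) \<bullet> x) *\<^sub>R (M *v (v j - ens_mean J v)))"
    unfolding emp_cov_mv by (simp add: e)
  also have "\<dots> = M *v (emp_cov J v *v (transpose M *v x))"
    unfolding emp_cov_mv by (simp add: dot_mv lin_sum matrix_vector_mult_scaleR)
  finally show ?thesis .
qed

lemma transpose_diff: "transpose (A - B) = transpose A - (transpose B :: real^'n^'m)"
  by (simp add: transpose_def vec_eq_iff)

lemma transpose_add: "transpose (A + B) = transpose A + (transpose B :: real^'n^'m)"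
  by (simp add: transpose_def vec_eq_iff)

lemma matrix_inv_props:
  assumes "invertible (A::real^'n^'n)"
  shows "A ** matrix_inv A = mat 1" "matrix_inv A ** A = mat 1"
proof -
  have "\<exists>A'. A ** A' = mat 1 \<and> A' ** A = mat 1" using assms by (simp add: invertible_def)
  from someI_ex[OF this] show "A ** matrix_inv A = mat 1" "matrix_inv A ** A = mat 1"
    by (simp_all add: matrix_inv_def)
qed

theorem proposition3p1:
  fixes H :: "real^'d^'n" and Sigma :: "real^'n^'n" and y :: "real^'n"
    and J :: nat and v :: "nat \<Rightarrow> nat \<Rightarrow> real^'d"
  assumes "spd Sigma"
    and "J \<ge> 2"
    and EKI: "\<And>i j. j \<in> {1..J} \<Longrightarrow>
      v (Suc i) j = v i j + (emp_cov J (v i) ** transpose H **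
        matrix_inv (H ** emp_cov J (v i) ** transpose H + Sigma)) *v (y - H *v v i j)"
    and "w \<noteq> 0"
    and "(H ** emp_cov J (v i) ** transpose H) *v w = delta *\<^sub>R (Sigma *v w)"
  shows "(H ** emp_cov J (v (Suc i)) ** transpose H) *v w
           = (delta / (1 + delta)^2) *\<^sub>R (Sigma *v w)"
proof -
  define G where "G = emp_cov J (v i)"
  define C where "C = H ** G ** transpose H"
  define A where "A = C + Sigma"
  define Ai where "Ai = matrix_inv A"
  define K where "K = G ** transpose H ** Ai"
  define M where "M = mat 1 - K ** H"
  have SigT: "transpose Sigma = Sigma" and Sigpos: "\<And>x. x \<noteq> 0 \<Longrightarrow> x \<bullet> (Sigma *v x) > 0"
    using assms(1) by (auto simp: spd_def)
  have GT: "transpose G = G" unfolding G_def by (rule emp_cov_sym)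
  have Cv: "C *v x = H *v (G *v (transpose H *v x))" for x
    by (simp only: C_def matrix_vector_mul_assoc matrix_mul_assoc)
  have Cpsd: "x \<bullet> (C *v x) \<ge> 0" for x
  proof -
    have "x \<bullet> (C *v x) = (transpose H *v x) \<bullet> (G *v (transpose H *v x))"
      unfolding Cv by (metis dot_mv inner_commute transpose_transpose)
    also have "\<dots> \<ge> 0" unfolding G_def using assms(2) by (rule emp_cov_psd)
    finally show ?thesis .
  qed
  have Aker: "\<forall>x. A *v x = 0 \<longrightarrow> x = 0"
  proof (intro allI impI, rule ccontr)
    fix x assume h: "A *v x = 0" "x \<noteq> 0"
    have "x \<bullet> (A *v x) = x \<bullet> (C *v x) + x \<bullet> (Sigma *v x)"
      by (simp only: A_def matrix_vector_mult_add_rdistrib inner_add_right)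
    moreover have "x \<bullet> (C *v x) + x \<bullet> (Sigma *v x) > 0" using Cpsd[of x] Sigpos[OF h(2)] by linarith
    ultimately show False using h(1) by simp
  qed
  have Ainv: "invertible A"
    unfolding invertible_left_inverse matrix_left_invertible_ker by (rule Aker)
  note AAi = matrix_inv_props[OF Ainv, folded Ai_def]
  have CT: "transpose C = C" by (simp add: C_def matrix_transpose_mul GT matrix_mul_assoc)
  have AT: "transpose A = A" by (simp only: A_def transpose_add CT SigT)
  have AiT: "transpose Ai = Ai"
  proof -
    have "transpose (A ** Ai) = mat 1" by (simp add: AAi(1))
    then have L: "transpose Ai ** A = mat 1" by (simp only: matrix_transpose_mul AT)
    have "transpose Ai = transpose Ai ** (A ** Ai)" by (simp add: AAi(1))
    also have "\<dots> = (transpose Ai ** A) ** Ai" by (simp only: matrix_mul_assoc)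
    also have "\<dots> = Ai" by (simp add: L)
    finally show ?thesis .
  qed
  have Cw: "C *v w = delta *\<^sub>R (Sigma *v w)" using assms(5) by (simp add: C_def G_def)
  have dpos: "delta \<ge> 0"
  proof -
    have "w \<bullet> (C *v w) = delta * (w \<bullet> (Sigma *v w))" by (simp add: Cw)
    then show ?thesis using Cpsd[of w] Sigpos[OF assms(4)]
        zero_le_mult_iff[of delta "w \<bullet> (Sigma *v w)"] by linarith
  qed
  have Aw: "A *v w = (1 + delta) *\<^sub>R (Sigma *v w)"
    by (simp only: A_def matrix_vector_mult_add_rdistrib Cw scaleR_add_left scaleR_one add.commute)
  have AiSw: "Ai *v (Sigma *v w) = (1 / (1 + delta)) *\<^sub>R w"
  proof -
    have "w = Ai *v (A *v w)" by (simp add: matrix_vector_mul_assoc AAi(2))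
    also have "\<dots> = (1 + delta) *\<^sub>R (Ai *v (Sigma *v w))" by (simp add: Aw matrix_vector_mult_scaleR)
    finally have e: "w = (1 + delta) *\<^sub>R (Ai *v (Sigma *v w))" .
    have "(1 / (1 + delta)) *\<^sub>R w = (1 / (1 + delta)) *\<^sub>R ((1 + delta) *\<^sub>R (Ai *v (Sigma *v w)))"
      using e by (rule arg_cong[where f="\<lambda>z. (1 / (1 + delta)) *\<^sub>R z"])
    also have "\<dots> = Ai *v (Sigma *v w)" using dpos by simp
    finally show ?thesis by (rule sym)
  qed
  have upd: "v (Suc i) j = M *v v i j + K *v y" if "j \<in> {1..J}" for j
  proof -
    have "v (Suc i) j = v i j + K *v (y - H *v v i j)"
      unfolding K_def Ai_def A_def C_def G_def by (rule EKI[OF that])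
    then show ?thesis
      by (simp only: M_def matrix_vector_mult_diff_rdistrib matrix_vector_mult_diff_distrib matrix_vector_mul_lid matrix_vector_mul_assoc) (simp add: algebra_simps)
  qed
  define hw where "hw = transpose H *v w"
  have TM: "transpose M = mat 1 - transpose H ** (Ai ** (H ** G))"
    by (simp only: M_def K_def transpose_diff matrix_transpose_mul AiT GT transpose_mat transpose_transpose matrix_mul_assoc)
  have s1: "transpose M *v hw = hw - transpose H *v (Ai *v (C *v w))"
    unfolding TM matrix_vector_mult_diff_rdistrib
    by (simp only: C_def hw_def matrix_vector_mul_lid matrix_mul_lid matrix_vector_mul_assoc matrix_mul_assoc)
  also have "\<dots> = hw - (delta * (1 / (1 + delta))) *\<^sub>R hw"
    by (simp only: Cw AiSw matrix_vector_mult_scaleR scaleR_scaleR hw_def)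
  also have "\<dots> = (1 - delta * (1 / (1 + delta))) *\<^sub>R hw"
    by (simp only: scaleR_left_diff_distrib scaleR_one)
  also have "1 - delta * (1 / (1 + delta)) = 1 / (1 + delta)"
    using dpos by (simp add: field_simps)
  finally have s2: "transpose M *v hw = (1 / (1 + delta)) *\<^sub>R hw" .
  have s3: "H *v (M *v (G *v hw)) = C *v w - C *v (Ai *v (C *v w))"
  proof -
    have Mu: "M *v u = u - K *v (H *v u)" for u
      by (simp only: M_def matrix_vector_mult_diff_rdistrib matrix_vector_mul_lid matrix_vector_mul_assoc)
    have HGhw: "H *v (G *v hw) = C *v w"
      by (simp only: C_def hw_def matrix_vector_mul_assoc matrix_mul_assoc)
    have HK: "H *v (K *v z) = C *v (Ai *v z)" for z
      by (simp only: K_def C_def matrix_vector_mul_assoc matrix_mul_assoc)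
    show ?thesis by (simp only: Mu matrix_vector_mult_diff_distrib HGhw HK)
  qed
  have s4: "C *v w - C *v (Ai *v (C *v w)) = delta *\<^sub>R (Sigma *v w) - (delta * (1 / (1 + delta)) * delta) *\<^sub>R (Sigma *v w)"
    by (simp only: Cw AiSw matrix_vector_mult_scaleR scaleR_scaleR)
  have sc: "(1 / (1 + delta)) * (delta - delta * (1 / (1 + delta)) * delta) = delta / (1 + delta)^2"
    using dpos by (simp add: field_simps power2_eq_square)
  have s5: "emp_cov J (v (Suc i)) *v hw = M *v (G *v (transpose M *v hw))"
  proof -
    have J0: "J > 0" using assms(2) by simp
    show ?thesis unfolding G_def by (rule emp_cov_affine[OF J0 upd])
  qed
  have "(H ** emp_cov J (v (Suc i)) ** transpose H) *v w
      = H *v (emp_cov J (v (Suc i)) *v hw)" by (simp only: hw_def matrix_vector_mul_assoc matrix_mul_assoc)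
  also have "\<dots> = H *v (M *v (G *v (transpose M *v hw)))"
    by (simp only: s5)
  also have "\<dots> = (1 / (1 + delta)) *\<^sub>R (H *v (M *v (G *v hw)))"
    by (simp only: s2 matrix_vector_mult_scaleR)
  also have "\<dots> = (1 / (1 + delta)) *\<^sub>R (delta *\<^sub>R (Sigma *v w) - (delta * (1 / (1 + delta)) * delta) *\<^sub>R (Sigma *v w))"
    by (simp only: s3 s4)
  also have "\<dots> = ((1 / (1 + delta)) * (delta - delta * (1 / (1 + delta)) * delta)) *\<^sub>R (Sigma *v w)"
    by (simp only: scaleR_left_diff_distrib[symmetric] scaleR_scaleR)
  also have "\<dots> = (delta / (1 + delta)^2) *\<^sub>R (Sigma *v w)"
    by (simp only: sc)
  finally show ?thesis .
qed

end
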